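(* Let $M=(W,\bm{\Box},V)$ be a transitive neighborhood model and $\Sigma$ a set of formulas closed under subformulas. Then the transitive filtration $M^{T}_f=(W_f,\bm{\Box}^{T}_f,V_f)$ of $M$ through $\Sigma$ is a filtration of $M$ through $\Sigma$, i.e. $\bm{\Box}^{T}_f\widetilde{|\varphi|}_M=\widetilde{|\Box\varphi|}_M$ for every formula $\Box\varphi\in\Sigma$.
   Context: A neighborhood model is $M=(W,\bm{\Box},V)$ with $W\neq\varnothing$, $\bm{\Box}:\mathcal P(W)\to\mathcal P(W)$, $V:Var\to\mathcal P(W)$; truth sets: $|p|_M=V(p)$, $|\neg\varphi|_M=W\setminus|\varphi|_M$, $|\varphi\wedge\psi|_M=|\varphi|_M\cap|\psi|_M$, $|\Box\varphi|_M=\bm{\Box}|\varphi|_M$. $M$ is transitive if $\bm{\Box}X\subseteq\bm{\Box}\bm{\Box}X$ for all $X\subseteq W$. For $\Sigma$ closed under subformulas, $w\sim v$ iff $w,v$ satisfy the same formulas of $\Sigma$; $\widetilde w$ is the class of $w$, $W_f=\{\widetilde w:w\in W\}$, $\widetilde X=\{\widetilde w:w\in X\}$, $V_f(p)=\widetilde{|p|}_M$. A filtration of $M$ through $\Sigma$ is a model $(W_f,\bm{\Box}_f,V_f)$ with $\bm{\Box}_f\widetilde{|\varphi|}_M=\widetilde{|\Box\varphi|}_M$ whenever $\Box\varphi\in\Sigma$. The minimal filtration has $\bm{\Box}^{-}_fX=\widetilde{|\Box\varphi|}_M$ if $X=\widetilde{|\varphi|}_M$ for some formula $\Box\varphi\in\Sigma$,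 and $\bm{\Box}^{-}_fX=\varnothing$ otherwise. For any function $\bm{\Box}':\mathcal P(U)\to\mathcal P(U)$, its closure $\widehat{\bm{\Box}'}$ is given by $\widehat{\bm{\Box}'}X=X$ if $X=\bm{\Box}'Y$ for some $Y\subseteq U$, and $\varnothing$ otherwise. The transitive filtration is $M^{T}_f=(W_f,\bm{\Box}^{T}_f,V_f)$ with $\bm{\Box}^{T}_fX=\bm{\Box}^{-}_fX\cup\widehat{\bm{\Box}^{-}_f}X$. *)

theory Defs
  imports Main
begin

datatype 'v fm = Var 'v | Neg "'v fm" | Conj "'v fm" "'v fm" | Box "'v fm"

fun subformulas :: "'v fm \<Rightarrow> 'v fm set" where
  "subformulas (Var p) = {Var p}"
| "subformulas (Neg a) = insert (Neg a) (subformulas a)"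
| "subformulas (Conj a b) = insert (Conj a b) (subformulas a \<union> subformulas b)"
| "subformulas (Box a) = insert (Box a) (subformulas a)"

definition closed_subf :: "'v fm set \<Rightarrow> bool" where
  "closed_subf \<Sigma> \<longleftrightarrow> (\<forall>\<phi>\<in>\<Sigma>. subformulas \<phi> \<subseteq> \<Sigma>)"

definition nbhd_model :: "'w set \<Rightarrow> ('w set \<Rightarrow> 'w set) \<Rightarrow> ('v \<Rightarrow> 'w set) \<Rightarrow> bool" where
  "nbhd_model W N V \<longleftrightarrow> W \<noteq> {} \<and> (\<forall>X. X \<subseteq> W \<longrightarrow> N X \<subseteq> W) \<and> (\<forall>p. V p \<subseteq> W)"

definition transitive_model :: "'w set \<Rightarrow> ('w set \<Rightarrow> 'w set) \<Rightarrow> ('v \<Rightarrow> 'w set) \<Rightarrow> bool" where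
  "transitive_model W N V \<longleftrightarrow> (\<forall>X. X \<subseteq> W \<longrightarrow> N X \<subseteq> N (N X))"

fun truth :: "'w set \<Rightarrow> ('w set \<Rightarrow> 'w set) \<Rightarrow> ('v \<Rightarrow> 'w set) \<Rightarrow> 'v fm \<Rightarrow> 'w set" where
  "truth W N V (Var p) = V p"
| "truth W N V (Neg a) = W - truth W N V a"
| "truth W N V (Conj a b) = truth W N V a \<inter> truth W N V b"
| "truth W N V (Box a) = N (truth W N V a)"

definition cls :: "'w set \<Rightarrow> ('w set \<Rightarrow> 'w set) \<Rightarrow> ('v \<Rightarrow> 'w set) \<Rightarrow> 'v fm set \<Rightarrow> 'w \<Rightarrow> 'w set" where
  "cls W N V \<Sigma> w = {v\<in>W. \<forall>\<phi>\<in>\<Sigma>. (w \<in> truth W N V \<phi> \<longleftrightarrow> v \<in> truth W N V \<phi>)}"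

definition tl_set :: "'w set \<Rightarrow> ('w set \<Rightarrow> 'w set) \<Rightarrow> ('v \<Rightarrow> 'w set) \<Rightarrow> 'v fm set \<Rightarrow> 'w set \<Rightarrow> 'w set set" where
  "tl_set W N V \<Sigma> X = cls W N V \<Sigma> ` X"

definition box_min :: "'w set \<Rightarrow> ('w set \<Rightarrow> 'w set) \<Rightarrow> ('v \<Rightarrow> 'w set) \<Rightarrow> 'v fm set \<Rightarrow> 'w set set \<Rightarrow> 'w set set" where
  "box_min W N V \<Sigma> X =
     (if \<exists>\<phi>. Box \<phi> \<in> \<Sigma> \<and> X = tl_set W N V \<Sigma> (truth W N V \<phi>)
      then tl_set W N V \<Sigma> (truth W N V (Box (SOME \<phi>. Box \<phi> \<in> \<Sigma> \<and> X = tl_set W N V \<Sigma> (truth W N V \<phi>))))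
      else {})"

definition closure_op :: "'a set \<Rightarrow> ('a set \<Rightarrow> 'a set) \<Rightarrow> 'a set \<Rightarrow> 'a set" where
  "closure_op U B X = (if \<exists>Y. Y \<subseteq> U \<and> X = B Y then X else {})"

definition box_T :: "'w set \<Rightarrow> ('w set \<Rightarrow> 'w set) \<Rightarrow> ('v \<Rightarrow> 'w set) \<Rightarrow> 'v fm set \<Rightarrow> 'w set set \<Rightarrow> 'w set set" where
  "box_T W N V \<Sigma> X = box_min W N V \<Sigma> X \<union> closure_op (tl_set W N V \<Sigma> W) (box_min W N V \<Sigma>) X"

end

theory Submission
  imports Defs
begin

lemma truth_sub:
  assumes "nbhd_model W N V" shows "truth W N V a \<subseteq> W"
  using assms by (induction a) (auto simp: nbhd_model_def)

lemma tl_eq: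
  assumes "nbhd_model W N V" "a \<in> \<Sigma>" "b \<in> \<Sigma>"
    and "tl_set W N V \<Sigma> (truth W N V a) = tl_set W N V \<Sigma> (truth W N V b)"
  shows "truth W N V a = truth W N V b"
proof -
  have sub: "truth W N V c \<subseteq> W" for c using truth_sub[OF assms(1)] .
  have self: "w \<in> cls W N V \<Sigma> w" if "w \<in> W" for w
    using that by (auto simp: cls_def)
  have dir: "truth W N V a \<subseteq> truth W N V b"
    if "a \<in> \<Sigma>" "b \<in> \<Sigma>" "tl_set W N V \<Sigma> (truth W N V a) = tl_set W N V \<Sigma> (truth W N V b)" for a b
  proof
    fix w assume w: "w \<in> truth W N V a"
    then have "cls W N V \<Sigma> w \<in> tl_set W N V \<Sigma> (truth W N V b)"
      using that(3) by (auto simp: tl_set_def)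
    then obtain v where v: "v \<in> truth W N V b" "cls W N V \<Sigma> w = cls W N V \<Sigma> v"
      by (auto simp: tl_set_def)
    have "w \<in> W" using w sub by blast
    then have "w \<in> cls W N V \<Sigma> v" using self v(2) by metis
    then show "w \<in> truth W N V b" using v(1) that(2) by (auto simp: cls_def)
  qed
  show ?thesis using dir[of a b] dir[of b a] assms by auto
qed

lemma closed_sub: "closed_subf \<Sigma> \<Longrightarrow> Box a \<in> \<Sigma> \<Longrightarrow> a \<in> \<Sigma>"
  unfolding closed_subf_def by (cases a) force+

theorem mainTheorem6:
  fixes W :: "'w set" and N :: "'w set \<Rightarrow> 'w set" and V :: "'v \<Rightarrow> 'w set"
    and \<Sigma> :: "'v fm set"
  assumes "nbhd_model W N V"
    and "transitive_model W N V"
    and "closed_subf \<Sigma>"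
  shows "\<forall>\<phi>. Box \<phi> \<in> \<Sigma> \<longrightarrow>
           box_T W N V \<Sigma> (tl_set W N V \<Sigma> (truth W N V \<phi>)) = tl_set W N V \<Sigma> (truth W N V (Box \<phi>))"
proof (intro allI impI)
  fix \<phi> assume B: "Box \<phi> \<in> \<Sigma>"
  let ?T = "truth W N V" and ?tl = "tl_set W N V \<Sigma>"
  have bm: "box_min W N V \<Sigma> (?tl (?T \<phi>)) = ?tl (?T (Box \<phi>))"
    if B: "Box \<phi> \<in> \<Sigma>" for \<phi>
  proof -
    have ex: "\<exists>\<psi>. Box \<psi> \<in> \<Sigma> \<and> ?tl (?T \<phi>) = ?tl (?T \<psi>)" using B by blast
    define \<psi> where "\<psi> = (SOME \<psi>. Box \<psi> \<in> \<Sigma> \<and> ?tl (?T \<phi>) = ?tl (?T \<psi>))"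
    have p: "Box \<psi> \<in> \<Sigma> \<and> ?tl (?T \<phi>) = ?tl (?T \<psi>)"
      unfolding \<psi>_def by (rule someI_ex[OF ex])
    have "?T \<phi> = ?T \<psi>"
      using tl_eq[OF assms(1)] closed_sub[OF assms(3)] p B by blast
    then show ?thesis using ex unfolding box_min_def \<psi>_def[symmetric] by simp
  qed
  have cl: "closure_op (?tl W) (box_min W N V \<Sigma>) (?tl (?T \<phi>)) \<subseteq> ?tl (?T (Box \<phi>))"
  proof (cases "\<exists>Y. Y \<subseteq> ?tl W \<and> ?tl (?T \<phi>) = box_min W N V \<Sigma> Y")
    case False then show ?thesis unfolding closure_op_def by auto
  next
    case True
    then obtain Y where Y: "?tl (?T \<phi>) = box_min W N V \<Sigma> Y" by blast
    show ?thesis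
    proof (cases "\<exists>\<chi>. Box \<chi> \<in> \<Sigma> \<and> Y = ?tl (?T \<chi>)")
      case False
      then have "?tl (?T \<phi>) = {}" using Y unfolding box_min_def by auto
      then show ?thesis by (simp add: closure_op_def)
    next
      case True
      then obtain \<chi> where c: "Box \<chi> \<in> \<Sigma>" "Y = ?tl (?T \<chi>)" by blast
      have "?tl (?T \<phi>) = ?tl (?T (Box \<chi>))" using Y c bm by simp
      then have e: "?T \<phi> = ?T (Box \<chi>)"
        using tl_eq[OF assms(1)] closed_sub[OF assms(3)] B c by blast
      have "?T (Box \<chi>) \<subseteq> N (N (?T \<chi>))"
        using assms(2) truth_sub[OF assms(1)] by (simp add: transitive_model_def)
      then have "?T \<phi> \<subseteq> ?T (Box \<phi>)" using e by simp
      then show ?thesis by (auto simp: closure_op_def tl_set_def)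
    qed
  qed
  show "box_T W N V \<Sigma> (?tl (?T \<phi>)) = ?tl (?T (Box \<phi>))"
    unfolding box_T_def bm[OF B] using cl by blast
qed

end
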